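(* Let $G=(\mathbb Z/a_1\mathbb Z)\times\dots\times(\mathbb Z/a_r\mathbb Z)$ be a finite Abelian group, let $f,g:G\to\mathbb C$ and let $n\ge 1$. Then $M_n(f;x_1,\dots,x_{n-1})=M_n(g;x_1,\dots,x_{n-1})$ for all $x_1,\dots,x_{n-1}\in G$ if and only if $\widehat f(x_1)\cdots\widehat f(x_n)=\widehat g(x_1)\cdots\widehat g(x_n)$ for all $x_1,\dots,x_n\in G$ with $x_1+\dots+x_n=0$.
   Context: Elements of $G$ are tuples $x=(x[1],\dots,x[r])$ with componentwise addition modulo $a_k$. Define $\chi(x,y)=\exp\left(2\pi i\sum_{k=1}^r \frac{x[k]y[k]}{a_k}\right)$. The discrete Fourier transform of $f$ is $\widehat f(x)=\sum_{y\in G}f(y)\overline{\chi(x,y)}$. The $n$-th autocorrelation is $M_n(f;x_1,\dots,x_{n-1})=\sum_{y\in G}f(y)f(y+x_1)\cdots f(y+x_{n-1})$. *)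

theory Defs
  imports "HOL-Analysis.Analysis"
begin

text \<open>The group G = Z/a_1 x ... x Z/a_r, elements are tuples indexed by 1..r,
  represented as functions nat => int with x k in {0..<a k} for k in {1..r}
  and x k = 0 outside {1..r}.\<close>

definition grp :: "nat \<Rightarrow> (nat \<Rightarrow> int) \<Rightarrow> (nat \<Rightarrow> int) set" where
  "grp r a = {x. (\<forall>k\<in>{1..r}. 0 \<le> x k \<and> x k < a k) \<and> (\<forall>k. k \<notin> {1..r} \<longrightarrow> x k = 0)}"

definition gadd :: "nat \<Rightarrow> (nat \<Rightarrow> int) \<Rightarrow> (nat \<Rightarrow> int) \<Rightarrow> (nat \<Rightarrow> int) \<Rightarrow> (nat \<Rightarrow> int)" where
  "gadd r a x y = (\<lambda>k. if k \<in> {1..r} then (x k + y k) mod a k else 0)"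

definition gzero :: "nat \<Rightarrow> int" where
  "gzero = (\<lambda>k. 0)"

fun gsum :: "nat \<Rightarrow> (nat \<Rightarrow> int) \<Rightarrow> (nat \<Rightarrow> (nat \<Rightarrow> int)) \<Rightarrow> nat \<Rightarrow> (nat \<Rightarrow> int)" where
  "gsum r a xs 0 = gzero"
| "gsum r a xs (Suc m) = gadd r a (gsum r a xs m) (xs (Suc m))"

definition chi :: "nat \<Rightarrow> (nat \<Rightarrow> int) \<Rightarrow> (nat \<Rightarrow> int) \<Rightarrow> (nat \<Rightarrow> int) \<Rightarrow> complex" where
  "chi r a x y = exp (2 * pi * \<i> * complex_of_real (\<Sum>k=1..r. real_of_int (x k * y k) / real_of_int (a k)))"

definition dft :: "nat \<Rightarrow> (nat \<Rightarrow> int) \<Rightarrow> ((nat \<Rightarrow> int) \<Rightarrow> complex) \<Rightarrow> (nat \<Rightarrow> int) \<Rightarrow> complex" where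
  "dft r a f x = (\<Sum>y\<in>grp r a. f y * cnj (chi r a x y))"

definition autocorr :: "nat \<Rightarrow> (nat \<Rightarrow> int) \<Rightarrow> nat \<Rightarrow> ((nat \<Rightarrow> int) \<Rightarrow> complex) \<Rightarrow> (nat \<Rightarrow> (nat \<Rightarrow> int)) \<Rightarrow> complex" where
  "autocorr r a n f xs = (\<Sum>y\<in>grp r a. f y * (\<Prod>i=1..n-1. f (gadd r a y (xs i))))"

end

theory Submission imports Defs begin

definition ee :: "real \<Rightarrow> complex" where
  "ee t = exp (2 * pi * \<i> * complex_of_real t)"

lemma ee_add: "ee (s + t) = ee s * ee t"
  unfolding ee_def by (simp add: distrib_left exp_add)

lemma ee_int: "ee (real_of_int n) = 1"
proof -
  have "exp ((2 * complex_of_int n * pi) * \<i>) = 1" using exp_integer_2pi[of "real_of_int n"] by simp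
  then show ?thesis unfolding ee_def by (simp add: mult_ac)
qed

lemma cnj_ee: "cnj (ee t) = ee (- t)"
  unfolding ee_def by (simp add: exp_cnj)

lemma ee_cnj_mult: "ee t * cnj (ee t) = 1"
  by (simp add: cnj_ee ee_add[symmetric]) (simp add: ee_def)

lemma ee_eq_1: "ee t = 1 \<Longrightarrow> t \<in> \<int>"
proof -
  assume "ee t = 1"
  then obtain m :: int where "Im (2 * pi * \<i> * complex_of_real t) = of_int (2 * m) * pi"
    unfolding ee_def exp_eq_1 by blast
  then have "t = of_int m" by simp
  then show ?thesis by simp
qed

lemma ee_nat_mult: "ee (real j * t) = ee t ^ j"
  unfolding ee_def by (simp add: exp_of_nat_mult[symmetric] mult_ac)

lemma chi_prod: "chi r a x y = (\<Prod>k=1..r. ee (real_of_int (x k * y k) / real_of_int (a k)))"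
  unfolding chi_def ee_def by (simp add: exp_sum[symmetric] sum_distrib_left)

lemma chi_sym: "chi r a x y = chi r a y x"
  unfolding chi_def by (simp add: mult.commute)

lemma chi_gzero: "chi r a gzero y = 1"
  unfolding chi_def gzero_def by simp

lemma chi_norm: "chi r a x y * cnj (chi r a x y) = 1"
  unfolding chi_prod by (simp add: prod.distrib[symmetric] ee_cnj_mult)

lemma chi_gadd2:
  assumes apos: "\<forall>k\<in>{1..r}. a k \<ge> 1"
  shows "chi r a x (gadd r a y z) = chi r a x y * chi r a x z"
  unfolding chi_prod prod.distrib[symmetric]
proof (rule prod.cong[OF refl])
  fix k assume k: "k \<in> {1..r}"
  define A where "A = a k"
  have A: "A \<noteq> 0" using apos k unfolding A_def by force
  have m: "(y k + z k) mod A = y k + z k - A * ((y k + z k) div A)"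
    by (simp add: minus_div_mult_eq_mod[symmetric])
  have "real_of_int (x k * gadd r a y z k) / real_of_int (a k)
      = real_of_int (x k * y k) / real_of_int (a k) + real_of_int (x k * z k) / real_of_int (a k)
        + real_of_int (- (x k * ((y k + z k) div A)))"
    using k A unfolding gadd_def A_def[symmetric] m by (simp add: field_simps)
  then show "ee (real_of_int (x k * gadd r a y z k) / real_of_int (a k)) =
      ee (real_of_int (x k * y k) / real_of_int (a k)) * ee (real_of_int (x k * z k) / real_of_int (a k))"
    by (simp only: ee_add ee_int) simp
qed

lemma chi_gadd1:
  assumes apos: "\<forall>k\<in>{1..r}. a k \<ge> 1"
  shows "chi r a (gadd r a y z) x = chi r a y x * chi r a z x"
  using chi_gadd2[OF apos] chi_sym by metis

lemma gadd_in: 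
  assumes apos: "\<forall>k\<in>{1..r}. a k \<ge> 1"
  shows "gadd r a x y \<in> grp r a"
  using apos unfolding grp_def gadd_def by auto

lemma gzero_in:
  assumes apos: "\<forall>k\<in>{1..r}. a k \<ge> 1"
  shows "gzero \<in> grp r a"
  using apos unfolding grp_def gzero_def by auto

lemma grp_bij: "bij_betw (\<lambda>x. restrict x {1..r}) (grp r a) (PiE {1..r} (\<lambda>k. {0..<a k}))"
proof (rule bij_betwI[where g = "\<lambda>p k. if k \<in> {1..r} then p k else 0"])
  show "(\<lambda>x. restrict x {1..r}) \<in> grp r a \<rightarrow> PiE {1..r} (\<lambda>k. {0..<a k})"
    unfolding grp_def by auto
  show "(\<lambda>p k. if k \<in> {1..r} then p k else 0) \<in> PiE {1..r} (\<lambda>k. {0..<a k}) \<rightarrow> grp r a"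
    unfolding grp_def by (auto simp: PiE_def Pi_def)
  show "\<And>x. x \<in> grp r a \<Longrightarrow> (\<lambda>k. if k \<in> {1..r} then restrict x {1..r} k else 0) = x"
    unfolding grp_def by auto
  show "\<And>y. y \<in> PiE {1..r} (\<lambda>k. {0..<a k}) \<Longrightarrow> restrict (\<lambda>k. if k \<in> {1..r} then y k else 0) {1..r} = y"
    by (auto simp: PiE_def extensional_def)
qed

lemma grp_finite: "finite (grp r a)"
  using bij_betw_finite[OF grp_bij] by (simp add: finite_PiE)

lemma sum_grp_prod:
  "(\<Sum>x\<in>grp r a. \<Prod>k=1..r. (h k (x k) :: complex)) = (\<Prod>k=1..r. \<Sum>j\<in>{0..<a k}. h k j)"
proof -
  have "(\<Prod>k=1..r. \<Sum>j\<in>{0..<a k}. h k j) = (\<Sum>p\<in>PiE {1..r} (\<lambda>k. {0..<a k}). \<Prod>k=1..r. h k (p k))"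
    by (rule prod_sum_PiE) auto
  also have "\<dots> = (\<Sum>x\<in>grp r a. \<Prod>k=1..r. h k (restrict x {1..r} k))"
    by (rule sum.reindex_bij_betw[OF grp_bij, symmetric])
  also have "\<dots> = (\<Sum>x\<in>grp r a. \<Prod>k=1..r. h k (x k))"
    by simp
  finally show ?thesis by simp
qed

lemma transl_inj:
  assumes apos: "\<forall>k\<in>{1..r}. a k \<ge> 1"
  shows "inj_on (gadd r a y) (grp r a)"
proof (rule inj_onI)
  fix x x' assume x: "x \<in> grp r a" and x': "x' \<in> grp r a" and e: "gadd r a y x = gadd r a y x'"
  show "x = x'"
  proof
    fix k show "x k = x' k"
    proof (cases "k \<in> {1..r}")
      case True
      have "(y k + x k) mod a k = (y k + x' k) mod a k"
        using fun_cong[OF e, of k] True unfolding gadd_def by simp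
      then have "x k mod a k = x' k mod a k"
        by (metis add_diff_cancel_left' mod_diff_left_eq)
      moreover have "x k mod a k = x k" "x' k mod a k = x' k"
        using x x' True unfolding grp_def by auto
      ultimately show ?thesis by simp
    next
      case False then show ?thesis using x x' unfolding grp_def by auto
    qed
  qed
qed

lemma transl_bij:
  assumes apos: "\<forall>k\<in>{1..r}. a k \<ge> 1"
  shows "bij_betw (gadd r a y) (grp r a) (grp r a)"
  unfolding bij_betw_def
  using transl_inj[OF apos] endo_inj_surj[OF grp_finite _ transl_inj[OF apos]] gadd_in[OF apos]
  by blast


lemma geom:
  fixes A d :: int
  assumes A: "A \<ge> 1"
  shows "(\<Sum>j\<in>{0..<A}. ee (real_of_int (j * d) / real_of_int A)) = (if A dvd d then of_int A else 0)"
proof -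
  have img: "{0..<A} = int ` {..<nat A}"
    using A by (auto simp: image_iff intro!: bexI[where x="nat _"])
  have S: "(\<Sum>j\<in>{0..<A}. ee (real_of_int (j * d) / real_of_int A))
      = (\<Sum>j<nat A. ee (real_of_int d / real_of_int A) ^ j)"
    unfolding img by (subst sum.reindex) (auto simp: ee_nat_mult[symmetric] inj_on_def)
  show ?thesis
  proof (cases "A dvd d")
    case True
    then obtain q where q: "d = A * q" by blast
    have "ee (real_of_int d / real_of_int A) = 1"
      using A by (simp add: q ee_int)
    then show ?thesis using True S A by simp
  next
    case False
    define w where "w = ee (real_of_int d / real_of_int A)"
    have w1: "w \<noteq> 1"
    proof
      assume "w = 1"
      then have "real_of_int d / real_of_int A \<in> \<int>" unfolding w_def by (rule ee_eq_1)
      then obtain q where "real_of_int d / real_of_int A = of_int q" by (auto elim: Ints_cases)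
      then have "real_of_int d = real_of_int (A * q)" using A by (simp add: field_simps)
      then have "d = A * q" by linarith
      then show False using False by simp
    qed
    have wA: "w ^ nat A = 1"
      unfolding w_def ee_nat_mult[symmetric] using A by (simp add: ee_int)
    show ?thesis using S False geometric_sum[OF w1, of "nat A"] wA unfolding w_def by simp
  qed
qed

lemma card_grp:
  assumes apos: "\<forall>k\<in>{1..r}. a k \<ge> 1"
  shows "(of_nat (card (grp r a)) :: complex) = (\<Prod>k=1..r. of_int (a k))"
proof -
  have "(of_nat (card (grp r a)) :: complex) = (\<Sum>x\<in>grp r a. \<Prod>k=1..r. (1::complex))" by simp
  also have "\<dots> = (\<Prod>k=1..r. \<Sum>j\<in>{0..<a k}. (1::complex))" by (rule sum_grp_prod)
  also have "\<dots> = (\<Prod>k=1..r. of_int (a k))"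
  proof (rule prod.cong[OF refl])
    fix k assume "k \<in> {1..r}"
    then have "a k \<ge> 1" using apos by blast
    then show "(\<Sum>j\<in>{0..<a k}. (1::complex)) = of_int (a k)" by (simp add: of_nat_nat)
  qed
  finally show ?thesis .
qed

lemma orth:
  assumes apos: "\<forall>k\<in>{1..r}. a k \<ge> 1"
    and w: "w \<in> grp r a" and x: "x \<in> grp r a"
  shows "(\<Sum>\<xi>\<in>grp r a. cnj (chi r a \<xi> w) * chi r a \<xi> x) = (if w = x then of_nat (card (grp r a)) else 0)"
proof -
  have "(\<Sum>\<xi>\<in>grp r a. cnj (chi r a \<xi> w) * chi r a \<xi> x)
     = (\<Sum>\<xi>\<in>grp r a. \<Prod>k=1..r. ee (real_of_int (\<xi> k * (x k - w k)) / real_of_int (a k)))"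
  proof (rule sum.cong[OF refl])
    fix \<xi>
    have "cnj (chi r a \<xi> w) * chi r a \<xi> x
      = (\<Prod>k=1..r. ee (- (real_of_int (\<xi> k * w k) / real_of_int (a k))) * ee (real_of_int (\<xi> k * x k) / real_of_int (a k)))"
      unfolding chi_prod by (simp add: cnj_ee prod.distrib)
    also have "\<dots> = (\<Prod>k=1..r. ee (real_of_int (\<xi> k * (x k - w k)) / real_of_int (a k)))"
      by (intro prod.cong refl) (simp add: ee_add[symmetric] right_diff_distrib diff_divide_distrib)
    finally show "cnj (chi r a \<xi> w) * chi r a \<xi> x = \<dots>" .
  qed
  also have "\<dots> = (\<Prod>k=1..r. \<Sum>j\<in>{0..<a k}. ee (real_of_int (j * (x k - w k)) / real_of_int (a k)))"
    by (rule sum_grp_prod)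
  also have "\<dots> = (\<Prod>k=1..r. if a k dvd (x k - w k) then of_int (a k) else 0)"
    using apos by (intro prod.cong refl geom) auto
  also have "\<dots> = (if w = x then of_nat (card (grp r a)) else 0)"
  proof (cases "w = x")
    case True then show ?thesis by (simp add: card_grp[OF apos])
  next
    case False
    then obtain k where kne: "w k \<noteq> x k" by blast
    have k: "k \<in> {1..r}"
    proof (rule ccontr)
      assume "k \<notin> {1..r}"
      then have "w k = 0" "x k = 0" using w x unfolding grp_def by auto
      with kne show False by simp
    qed
    have "\<not> a k dvd (x k - w k)"
    proof
      assume dv: "a k dvd (x k - w k)"
      have "0 \<le> x k" "x k < a k" "0 \<le> w k" "w k < a k" using w x k unfolding grp_def by auto
      then have "\<bar>x k - w k\<bar> < a k" by linarith
      moreover have "x k - w k \<noteq> 0" using kne by simp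
      then have "\<bar>a k\<bar> \<le> \<bar>x k - w k\<bar>" using dv by (rule dvd_imp_le_int)
      ultimately show False by linarith
    qed
    then show ?thesis using False k by (auto intro!: prod_zero bexI[of _ k])
  qed
  finally show ?thesis .
qed


lemma transl_sum:
  assumes apos: "\<forall>k\<in>{1..r}. a k \<ge> 1" and y: "y \<in> grp r a"
  shows "(\<Sum>x\<in>grp r a. f (gadd r a y x) * cnj (chi r a \<xi> x)) = chi r a \<xi> y * dft r a f \<xi>"
proof -
  have "dft r a f \<xi> = (\<Sum>x\<in>grp r a. f (gadd r a y x) * cnj (chi r a \<xi> (gadd r a y x)))"
    unfolding dft_def by (rule sum.reindex_bij_betw[OF transl_bij[OF apos], symmetric])
  also have "\<dots> = (\<Sum>x\<in>grp r a. f (gadd r a y x) * cnj (chi r a \<xi> y) * cnj (chi r a \<xi> x))"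
    by (simp add: chi_gadd2[OF apos] mult_ac)
  finally have "chi r a \<xi> y * dft r a f \<xi>
     = (\<Sum>x\<in>grp r a. f (gadd r a y x) * (chi r a \<xi> y * cnj (chi r a \<xi> y)) * cnj (chi r a \<xi> x))"
    by (simp add: sum_distrib_left mult_ac)
  then show ?thesis by (simp add: chi_norm)
qed

lemma chi_gsum:
  assumes apos: "\<forall>k\<in>{1..r}. a k \<ge> 1"
  shows "(\<Prod>i=1..m. chi r a (\<xi> i) y) = chi r a (gsum r a \<xi> m) y"
proof (induction m)
  case 0 then show ?case by (simp add: chi_gzero)
next
  case (Suc m)
  then show ?case by (simp add: prod.nat_ivl_Suc' chi_gadd1[OF apos] mult_ac)
qed

lemma chi_last:
  assumes apos: "\<forall>k\<in>{1..r}. a k \<ge> 1"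
    and e: "gadd r a u v = gzero"
  shows "chi r a u y = cnj (chi r a v y)"
proof -
  have "1 = chi r a u y * chi r a v y"
    using chi_gadd1[OF apos, of u v y] e chi_gzero by simp
  then have "cnj (chi r a v y) = chi r a u y * (chi r a v y * cnj (chi r a v y))"
    by (metis mult.assoc mult_1)
  then show ?thesis by (simp add: chi_norm)
qed

lemma gsum_cong: "(\<forall>i\<in>{1..m}. xs i = ys i) \<Longrightarrow> gsum r a xs m = gsum r a ys m"
  by (induction m) auto

definition gneg :: "nat \<Rightarrow> (nat \<Rightarrow> int) \<Rightarrow> (nat \<Rightarrow> int) \<Rightarrow> (nat \<Rightarrow> int)" where
  "gneg r a x = (\<lambda>k. if k \<in> {1..r} then (- x k) mod a k else 0)"

lemma gneg_in:
  assumes apos: "\<forall>k\<in>{1..r}. a k \<ge> 1"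
  shows "gneg r a x \<in> grp r a"
  using apos unfolding grp_def gneg_def by auto

lemma gadd_gneg: "gadd r a x (gneg r a x) = gzero"
  unfolding gadd_def gneg_def gzero_def by (auto simp: mod_add_right_eq)

lemma autocorr_hat:
  assumes apos: "\<forall>k\<in>{1..r}. a k \<ge> 1" and n: "n = Suc m"
    and e: "gsum r a \<xi> n = gzero"
  shows "(\<Sum>xs\<in>PiE {1..m} (\<lambda>_. grp r a). autocorr r a n h xs * (\<Prod>i=1..m. cnj (chi r a (\<xi> i) (xs i))))
     = (\<Prod>i=1..n. dft r a h (\<xi> i))"
proof -
  let ?G = "grp r a" let ?PG = "PiE {1..m} (\<lambda>_. grp r a)"
  have "(\<Sum>xs\<in>?PG. autocorr r a n h xs * (\<Prod>i=1..m. cnj (chi r a (\<xi> i) (xs i))))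
    = (\<Sum>xs\<in>?PG. \<Sum>y\<in>?G. h y * (\<Prod>i=1..m. h (gadd r a y (xs i)) * cnj (chi r a (\<xi> i) (xs i))))"
    unfolding autocorr_def n by (intro sum.cong refl) (simp add: sum_distrib_left sum_distrib_right prod.distrib mult_ac)
  also have "\<dots> = (\<Sum>y\<in>?G. h y * (\<Sum>xs\<in>?PG. \<Prod>i=1..m. h (gadd r a y (xs i)) * cnj (chi r a (\<xi> i) (xs i))))"
    by (subst sum.swap) (simp add: sum_distrib_left)
  also have "\<dots> = (\<Sum>y\<in>?G. h y * (\<Prod>i=1..m. \<Sum>x\<in>?G. h (gadd r a y x) * cnj (chi r a (\<xi> i) x)))"
    by (intro sum.cong refl arg_cong2[where f="(*)"] prod_sum_PiE[symmetric]) (auto simp: grp_finite)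
  also have "\<dots> = (\<Sum>y\<in>?G. h y * ((\<Prod>i=1..m. chi r a (\<xi> i) y) * (\<Prod>i=1..m. dft r a h (\<xi> i))))"
    by (intro sum.cong refl) (simp add: transl_sum[OF apos] prod.distrib)
  also have "\<dots> = (\<Sum>y\<in>?G. h y * (cnj (chi r a (\<xi> n) y) * (\<Prod>i=1..m. dft r a h (\<xi> i))))"
  proof -
    have "gadd r a (gsum r a \<xi> m) (\<xi> n) = gzero" using e n by simp
    then have "\<And>y. (\<Prod>i=1..m. chi r a (\<xi> i) y) = cnj (chi r a (\<xi> n) y)"
      by (simp only: chi_gsum[OF apos] chi_last[OF apos])
    then show ?thesis by simp
  qed
  also have "\<dots> = dft r a h (\<xi> n) * (\<Prod>i=1..m. dft r a h (\<xi> i))"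
    unfolding dft_def by (simp add: sum_distrib_right mult_ac)
  also have "\<dots> = (\<Prod>i=1..n. dft r a h (\<xi> i))"
    unfolding n by (simp add: prod.nat_ivl_Suc')
  finally show ?thesis .
qed

lemma prod_if_const:
  assumes "finite I"
  shows "(\<Prod>i\<in>I. if P i then (c::complex) else 0) = (if \<forall>i\<in>I. P i then c ^ card I else 0)"
  using assms by (auto intro: prod_zero)

lemma inversion:
  assumes apos: "\<forall>k\<in>{1..r}. a k \<ge> 1"
    and xs: "\<forall>i\<in>{1..m}. xs i \<in> grp r a"
  shows "(\<Sum>\<xi>\<in>PiE {1..m} (\<lambda>_. grp r a).
            (\<Sum>ws\<in>PiE {1..m} (\<lambda>_. grp r a). Mf ws * (\<Prod>i=1..m. cnj (chi r a (\<xi> i) (ws i))))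
              * (\<Prod>i=1..m. chi r a (\<xi> i) (xs i)))
        = of_nat (card (grp r a)) ^ m * Mf (restrict xs {1..m})"
proof -
  let ?G = "grp r a" let ?PG = "PiE {1..m} (\<lambda>_. grp r a)" let ?c = "(of_nat (card (grp r a)) :: complex)"
  have "(\<Sum>\<xi>\<in>?PG. (\<Sum>ws\<in>?PG. Mf ws * (\<Prod>i=1..m. cnj (chi r a (\<xi> i) (ws i)))) * (\<Prod>i=1..m. chi r a (\<xi> i) (xs i)))
     = (\<Sum>\<xi>\<in>?PG. \<Sum>ws\<in>?PG. Mf ws * (\<Prod>i=1..m. cnj (chi r a (\<xi> i) (ws i)) * chi r a (\<xi> i) (xs i)))"
    by (intro sum.cong refl) (simp add: sum_distrib_left sum_distrib_right prod.distrib mult_ac)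
  also have "\<dots> = (\<Sum>ws\<in>?PG. Mf ws * (\<Sum>\<xi>\<in>?PG. \<Prod>i=1..m. cnj (chi r a (\<xi> i) (ws i)) * chi r a (\<xi> i) (xs i)))"
    by (subst sum.swap) (simp add: sum_distrib_left)
  also have "\<dots> = (\<Sum>ws\<in>?PG. Mf ws * (\<Prod>i=1..m. \<Sum>\<eta>\<in>?G. cnj (chi r a \<eta> (ws i)) * chi r a \<eta> (xs i)))"
    by (intro sum.cong refl arg_cong2[where f="(*)"] prod_sum_PiE[symmetric]) (auto simp: grp_finite)
  also have "\<dots> = (\<Sum>ws\<in>?PG. Mf ws * (\<Prod>i=1..m. if ws i = xs i then ?c else 0))"
  proof (intro sum.cong refl arg_cong2[where f="(*)"] prod.cong)
    fix ws i assume ws: "ws \<in> ?PG" and i: "i \<in> {1..m}"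
    have "ws i \<in> ?G" using ws i by (rule PiE_mem)
    moreover have "xs i \<in> ?G" using xs i by blast
    ultimately show "(\<Sum>\<eta>\<in>?G. cnj (chi r a \<eta> (ws i)) * chi r a \<eta> (xs i)) = (if ws i = xs i then ?c else 0)"
      by (rule orth[OF apos])
  qed
  also have "\<dots> = (\<Sum>ws\<in>?PG. Mf ws * (if ws = restrict xs {1..m} then ?c ^ m else 0))"
  proof (intro sum.cong refl arg_cong2[where f="(*)"])
    fix ws assume ws: "ws \<in> ?PG"
    have "(\<forall>i\<in>{1..m}. ws i = xs i) \<longleftrightarrow> ws = restrict xs {1..m}"
      using ws by (auto simp: PiE_def extensional_def)
    then show "(\<Prod>i=1..m. if ws i = xs i then ?c else 0) = (if ws = restrict xs {1..m} then ?c ^ m else 0)"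
      by (simp add: prod_if_const)
  qed
  also have "\<dots> = Mf (restrict xs {1..m}) * ?c ^ m"
  proof -
    have "restrict xs {1..m} \<in> ?PG" using xs by auto
    then show ?thesis by (simp add: sum.delta' finite_PiE grp_finite if_distrib cong: if_cong)
  qed
  finally show ?thesis by (simp add: mult.commute)
qed


theorem corollary1:
  fixes r :: nat and a :: "nat \<Rightarrow> int" and f g :: "(nat \<Rightarrow> int) \<Rightarrow> complex" and n :: nat
  assumes "\<forall>k\<in>{1..r}. a k \<ge> 1"
    and "n \<ge> 1"
  shows "(\<forall>xs. (\<forall>i\<in>{1..n-1}. xs i \<in> grp r a) \<longrightarrow> autocorr r a n f xs = autocorr r a n g xs)
     \<longleftrightarrow> (\<forall>xs. (\<forall>i\<in>{1..n}. xs i \<in> grp r a) \<and> gsum r a xs n = gzero \<longrightarrow>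
            (\<Prod>i=1..n. dft r a f (xs i)) = (\<Prod>i=1..n. dft r a g (xs i)))"
proof -
  note apos = assms(1)
  define m where "m = n - 1"
  have n: "n = Suc m" using assms(2) unfolding m_def by simp
  let ?G = "grp r a" let ?PG = "PiE {1..m} (\<lambda>_. grp r a)"
  define T where "T h \<xi> = (\<Sum>xs\<in>?PG. autocorr r a n h xs * (\<Prod>i=1..m. cnj (chi r a (\<xi> i) (xs i))))" for h \<xi>
  have TA: "T h \<xi> = (\<Prod>i=1..n. dft r a h (\<xi> i))" if "gsum r a \<xi> n = gzero" for h \<xi>
    unfolding T_def by (rule autocorr_hat[OF apos n that])
  show ?thesis
  proof
    assume H1: "\<forall>xs. (\<forall>i\<in>{1..n-1}. xs i \<in> grp r a) \<longrightarrow> autocorr r a n f xs = autocorr r a n g xs"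
    show "\<forall>xs. (\<forall>i\<in>{1..n}. xs i \<in> grp r a) \<and> gsum r a xs n = gzero \<longrightarrow>
            (\<Prod>i=1..n. dft r a f (xs i)) = (\<Prod>i=1..n. dft r a g (xs i))"
    proof (intro allI impI)
      fix \<xi> assume "(\<forall>i\<in>{1..n}. \<xi> i \<in> grp r a) \<and> gsum r a \<xi> n = gzero"
      then have e: "gsum r a \<xi> n = gzero" by blast
      have "T f \<xi> = T g \<xi>"
        unfolding T_def
      proof (intro sum.cong refl arg_cong2[where f="(*)"])
        fix xs assume xs: "xs \<in> ?PG"
        have "\<forall>i\<in>{1..n-1}. xs i \<in> grp r a" using xs unfolding m_def by (auto intro: PiE_mem)
        then show "autocorr r a n f xs = autocorr r a n g xs" using H1 by blast
      qed
      then show "(\<Prod>i=1..n. dft r a f (\<xi> i)) = (\<Prod>i=1..n. dft r a g (\<xi> i))"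
        using TA[OF e] by simp
    qed
  next
    assume H2: "\<forall>xs. (\<forall>i\<in>{1..n}. xs i \<in> grp r a) \<and> gsum r a xs n = gzero \<longrightarrow>
            (\<Prod>i=1..n. dft r a f (xs i)) = (\<Prod>i=1..n. dft r a g (xs i))"
    show "\<forall>xs. (\<forall>i\<in>{1..n-1}. xs i \<in> grp r a) \<longrightarrow> autocorr r a n f xs = autocorr r a n g xs"
    proof (intro allI impI)
      fix xs assume "\<forall>i\<in>{1..n-1}. xs i \<in> grp r a"
      then have xs: "\<forall>i\<in>{1..m}. xs i \<in> grp r a" unfolding m_def .
      have Teq: "T f \<xi> = T g \<xi>" if \<xi>: "\<xi> \<in> ?PG" for \<xi>
      proof -
        define \<xi>' where "\<xi>' = \<xi>(n := gneg r a (gsum r a \<xi> m))"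
        have TT: "T h \<xi> = T h \<xi>'" for h
          unfolding T_def \<xi>'_def n by (intro sum.cong refl arg_cong2[where f="(*)"] prod.cong) auto
        have gs: "gsum r a \<xi>' m = gsum r a \<xi> m"
          by (rule gsum_cong) (auto simp: \<xi>'_def n)
        have e: "gsum r a \<xi>' n = gzero"
          using gs by (simp add: n \<xi>'_def[of] gadd_gneg del: fun_upd_apply) (simp add: \<xi>'_def gadd_gneg)
        have mem: "\<forall>i\<in>{1..n}. \<xi>' i \<in> grp r a"
        proof
          fix i assume i: "i \<in> {1..n}"
          show "\<xi>' i \<in> grp r a"
          proof (cases "i = n")
            case True then show ?thesis by (simp add: \<xi>'_def gneg_in[OF apos])
          next
            case False
            then have "i \<in> {1..m}" using i n by auto
            then have "\<xi> i \<in> grp r a" using \<xi> by (rule PiE_mem[rotated])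
            then show ?thesis using False by (simp add: \<xi>'_def)
          qed
        qed
        have "T f \<xi>' = T g \<xi>'" using H2 mem e TA[OF e] by metis
        then show ?thesis using TT by metis
      qed
      let ?c = "(of_nat (card (grp r a)) :: complex)"
      have "?c ^ m * autocorr r a n f (restrict xs {1..m})
          = (\<Sum>\<xi>\<in>?PG. T f \<xi> * (\<Prod>i=1..m. chi r a (\<xi> i) (xs i)))"
        unfolding T_def by (rule inversion[OF apos xs, symmetric])
      also have "\<dots> = (\<Sum>\<xi>\<in>?PG. T g \<xi> * (\<Prod>i=1..m. chi r a (\<xi> i) (xs i)))"
        using Teq by (intro sum.cong refl) auto
      also have "\<dots> = ?c ^ m * autocorr r a n g (restrict xs {1..m})"
        unfolding T_def by (rule inversion[OF apos xs])
      finally have eq: "?c ^ m * autocorr r a n f (restrict xs {1..m}) = ?c ^ m * autocorr r a n g (restrict xs {1..m})" .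
      have "card (grp r a) \<noteq> 0" using grp_finite gzero_in[OF apos] by (metis card_0_eq empty_iff)
      then have nz: "?c ^ m \<noteq> 0" by simp
      have eq2: "autocorr r a n f (restrict xs {1..m}) = autocorr r a n g (restrict xs {1..m})"
        using mult_left_cancel[OF nz] eq by blast
      have R: "autocorr r a n h (restrict xs {1..m}) = autocorr r a n h xs" for h
        unfolding autocorr_def m_def by (intro sum.cong refl arg_cong2[where f="(*)"] prod.cong) auto
      show "autocorr r a n f xs = autocorr r a n g xs" using eq2 R by metis
    qed
  qed
qed

end
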